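(* Let $G=(\mathcal V,\mathcal H,\nu,\iota;\mathcal S,\mu,\sigma_1,\sigma_2)$ be a 2-graph. Define the set of cells $\mathcal C_G:=\mathcal V\cup(\mathcal E\cup\mathcal E^{\mathrm{ext}})\cup\mathcal F$ with dimension $0$ for vertices, $1$ for (internal or external) edges and $2$ for faces, and the relation $<$ given by: for $v\in\mathcal V$, $e\in\mathcal E\cup\mathcal E^{\mathrm{ext}}$, $f\in\mathcal F$, $v<e$ iff there is $h\in e$ with $\nu(h)=v$; $e<f$ iff there are $h\in e$ and $s$ occurring in $f$ with $\mu(s)=h$; $v<f$ iff there is an $e$ with $v<e<f$. Then $\mathcal C_G$ is a pure complex in the sense of Reidemeister. If moreover $\nu^{-1}(v)\neq\emptyset$ for every $v\in\mathcal V$ and $\mu^{-1}(h)\neq\emptyset$ for every $h\in\mathcal H$, then $\mathcal C_G$ is a 2-dimensional complex.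
   Context: A 2-graph is a tuple $(\mathcal V,\mathcal H,\nu,\iota;\mathcal S,\mu,\sigma_1,\sigma_2)$ of finite sets $\mathcal V$ (vertices), $\mathcal H$ (half-edges), $\mathcal S$ (strand sections), maps $\nu:\mathcal H\to\mathcal V$, $\mu:\mathcal S\to\mathcal H$, an involution $\iota$ of $\mathcal H$, a fixed-point free involution $\sigma_1$ of $\mathcal S$ with $\nu\circ\mu\circ\sigma_1=\nu\circ\mu$, and an involution $\sigma_2$ of $\mathcal S$ with $\iota\circ\mu=\mu\circ\sigma_2$ such that $s$ is fixed by $\sigma_2$ iff $\mu(s)$ is fixed by $\iota$. The (internal) edges $\mathcal E$ are the two-element orbits $\{h,\iota(h)\}$; the external half-edges are the fixed points of $\iota$, and the external edges are $\mathcal E^{\mathrm{ext}}=\{\{h\}: \iota(h)=h\}$. Faces: a tuple $(s_1,\dots,s_{2n})$ of distinct strand sections with $s_{2i}=\sigma_1(s_{2i-1})$ and $s_{2i+1}=\sigma_2(s_{2i})$ is an external face if $s_1$ and $s_{2n}$ are fixed points of $\sigma_2$; if instead $\sigma_2(s_{2n})=s_1$, its equivalence class under cyclic shifts $s_i\mapsto s_{i+2}$ is an internal face; $\mathcal F$ is the set of all external and internal faces ("$s$ occurs in $f$" is independent of the representative). A complex in the sense of Reidemeister is a set $\mathcal C$ of cells with a dimension map $\dim:\mathcal C\to\mathbb N$ and a partial order $\le$ such that whenever $c>c''$ and $\dim c-\dim c''>1$ there is $c'$ with $c>c'>c''$. It is pure if every cell of nonzero dimension is $>$ some 0-cell. It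 is $n$-dimensional if $n$ is the maximal dimension of its cells and every cell is $\le$ some $n$-cell. *)

theory Defs
  imports Main
begin

text \<open>A 2-graph (V,H,nu,iota;S,mu,sigma1,sigma2), with carrier sets V, H, S
  inside ambient types; all maps are only constrained on the carriers.\<close>

definition two_graph ::
  "'v set \<Rightarrow> 'h set \<Rightarrow> ('h \<Rightarrow> 'v) \<Rightarrow> ('h \<Rightarrow> 'h) \<Rightarrow>
   's set \<Rightarrow> ('s \<Rightarrow> 'h) \<Rightarrow> ('s \<Rightarrow> 's) \<Rightarrow> ('s \<Rightarrow> 's) \<Rightarrow> bool" where
  "two_graph V H \<nu> \<iota> S \<mu> \<sigma>1 \<sigma>2 \<longleftrightarrow>
     finite V \<and> finite H \<and> finite S \<and>
     (\<forall>h\<in>H. \<nu> h \<in> V) \<and>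
     (\<forall>s\<in>S. \<mu> s \<in> H) \<and>
     (\<forall>h\<in>H. \<iota> h \<in> H \<and> \<iota> (\<iota> h) = h) \<and>
     (\<forall>s\<in>S. \<sigma>1 s \<in> S \<and> \<sigma>1 (\<sigma>1 s) = s \<and> \<sigma>1 s \<noteq> s) \<and>
     (\<forall>s\<in>S. \<nu> (\<mu> (\<sigma>1 s)) = \<nu> (\<mu> s)) \<and>
     (\<forall>s\<in>S. \<sigma>2 s \<in> S \<and> \<sigma>2 (\<sigma>2 s) = s) \<and>
     (\<forall>s\<in>S. \<iota> (\<mu> s) = \<mu> (\<sigma>2 s)) \<and>
     (\<forall>s\<in>S. \<sigma>2 s = s \<longleftrightarrow> \<iota> (\<mu> s) = \<mu> s)"

definition int_edges :: "'h set \<Rightarrow> ('h \<Rightarrow> 'h) \<Rightarrow> 'h set set" where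
  "int_edges H \<iota> = {{h, \<iota> h} | h. h \<in> H \<and> \<iota> h \<noteq> h}"

definition ext_edges :: "'h set \<Rightarrow> ('h \<Rightarrow> 'h) \<Rightarrow> 'h set set" where
  "ext_edges H \<iota> = {{h} | h. h \<in> H \<and> \<iota> h = h}"

text \<open>A tuple (s_1,...,s_{2n}), n \<ge> 1, of distinct strand sections with
  s_{2i} = sigma1 s_{2i-1} and s_{2i+1} = sigma2 s_{2i} (written 0-indexed below).\<close>

definition face_chain :: "'s set \<Rightarrow> ('s \<Rightarrow> 's) \<Rightarrow> ('s \<Rightarrow> 's) \<Rightarrow> 's list \<Rightarrow> bool" where
  "face_chain S \<sigma>1 \<sigma>2 xs \<longleftrightarrow>
     xs \<noteq> [] \<and> even (length xs) \<and> distinct xs \<and> set xs \<subseteq> S \<and>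
     (\<forall>i. 2*i+1 < length xs \<longrightarrow> xs ! (2*i+1) = \<sigma>1 (xs ! (2*i))) \<and>
     (\<forall>i. 2*i+2 < length xs \<longrightarrow> xs ! (2*i+2) = \<sigma>2 (xs ! (2*i+1)))"

definition ext_face_tuple :: "'s set \<Rightarrow> ('s \<Rightarrow> 's) \<Rightarrow> ('s \<Rightarrow> 's) \<Rightarrow> 's list \<Rightarrow> bool" where
  "ext_face_tuple S \<sigma>1 \<sigma>2 xs \<longleftrightarrow>
     face_chain S \<sigma>1 \<sigma>2 xs \<and> \<sigma>2 (hd xs) = hd xs \<and> \<sigma>2 (last xs) = last xs"

definition int_face_tuple :: "'s set \<Rightarrow> ('s \<Rightarrow> 's) \<Rightarrow> ('s \<Rightarrow> 's) \<Rightarrow> 's list \<Rightarrow> bool" where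
  "int_face_tuple S \<sigma>1 \<sigma>2 xs \<longleftrightarrow>
     face_chain S \<sigma>1 \<sigma>2 xs \<and> \<sigma>2 (last xs) = hd xs"

text \<open>Faces are represented as sets of tuples: an external face is the singleton
  of its tuple, an internal face is the class of its tuple under the cyclic
  shifts s_i \<mapsto> s_{i+2}.\<close>

definition faces :: "'s set \<Rightarrow> ('s \<Rightarrow> 's) \<Rightarrow> ('s \<Rightarrow> 's) \<Rightarrow> 's list set set" where
  "faces S \<sigma>1 \<sigma>2 =
     {{xs} | xs. ext_face_tuple S \<sigma>1 \<sigma>2 xs} \<union>
     {{rotate (2*k) xs | k. True} | xs. int_face_tuple S \<sigma>1 \<sigma>2 xs}"

definition occurs_in :: "'s \<Rightarrow> 's list set \<Rightarrow> bool" where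
  "occurs_in s f \<longleftrightarrow> (\<exists>xs\<in>f. s \<in> set xs)"

datatype ('v, 'h, 's) cell = VCell 'v | ECell "'h set" | FCell "'s list set"

fun cdim :: "('v, 'h, 's) cell \<Rightarrow> nat" where
  "cdim (VCell _) = 0"
| "cdim (ECell _) = 1"
| "cdim (FCell _) = 2"

definition cells ::
  "'v set \<Rightarrow> 'h set \<Rightarrow> ('h \<Rightarrow> 'h) \<Rightarrow> 's set \<Rightarrow> ('s \<Rightarrow> 's) \<Rightarrow> ('s \<Rightarrow> 's)
   \<Rightarrow> ('v, 'h, 's) cell set" where
  "cells V H \<iota> S \<sigma>1 \<sigma>2 =
     VCell ` V \<union> ECell ` (int_edges H \<iota> \<union> ext_edges H \<iota>) \<union> FCell ` faces S \<sigma>1 \<sigma>2"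

fun cellG_less :: "'h set set \<Rightarrow> ('h \<Rightarrow> 'v) \<Rightarrow> ('s \<Rightarrow> 'h) \<Rightarrow>
     ('v, 'h, 's) cell \<Rightarrow> ('v, 'h, 's) cell \<Rightarrow> bool" where
  "cellG_less Ed \<nu> \<mu> (VCell v) (ECell e) = (\<exists>h\<in>e. \<nu> h = v)"
| "cellG_less Ed \<nu> \<mu> (ECell e) (FCell f) = (\<exists>h\<in>e. \<exists>s. occurs_in s f \<and> \<mu> s = h)"
| "cellG_less Ed \<nu> \<mu> (VCell v) (FCell f) =
     (\<exists>e\<in>Ed. (\<exists>h\<in>e. \<nu> h = v) \<and> (\<exists>h\<in>e. \<exists>s. occurs_in s f \<and> \<mu> s = h))"
| "cellG_less Ed \<nu> \<mu> _ _ = False"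

definition cellG_le ::
  "'h set set \<Rightarrow> ('h \<Rightarrow> 'v) \<Rightarrow> ('s \<Rightarrow> 'h) \<Rightarrow>
     ('v, 'h, 's) cell \<Rightarrow> ('v, 'h, 's) cell \<Rightarrow> bool" where
  "cellG_le Ed \<nu> \<mu> c d \<longleftrightarrow> c = d \<or> cellG_less Ed \<nu> \<mu> c d"

definition reidemeister_complex :: "'c set \<Rightarrow> ('c \<Rightarrow> nat) \<Rightarrow> ('c \<Rightarrow> 'c \<Rightarrow> bool) \<Rightarrow> bool" where
  "reidemeister_complex C dim le \<longleftrightarrow>
     (\<forall>c\<in>C. le c c) \<and>
     (\<forall>a\<in>C. \<forall>b\<in>C. le a b \<and> le b a \<longrightarrow> a = b) \<and>
     (\<forall>a\<in>C. \<forall>b\<in>C. \<forall>c\<in>C. le a b \<and> le b c \<longrightarrow> le a c) \<and>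
     (\<forall>c\<in>C. \<forall>c''\<in>C. le c'' c \<and> c'' \<noteq> c \<and> dim c > dim c'' + 1 \<longrightarrow>
        (\<exists>c'\<in>C. le c' c \<and> c' \<noteq> c \<and> le c'' c' \<and> c'' \<noteq> c'))"

definition pure_complex :: "'c set \<Rightarrow> ('c \<Rightarrow> nat) \<Rightarrow> ('c \<Rightarrow> 'c \<Rightarrow> bool) \<Rightarrow> bool" where
  "pure_complex C dim le \<longleftrightarrow>
     (\<forall>c\<in>C. dim c \<noteq> 0 \<longrightarrow> (\<exists>c0\<in>C. dim c0 = 0 \<and> le c0 c \<and> c0 \<noteq> c))"

definition n_dim_complex :: "nat \<Rightarrow> 'c set \<Rightarrow> ('c \<Rightarrow> nat) \<Rightarrow> ('c \<Rightarrow> 'c \<Rightarrow> bool) \<Rightarrow> bool" where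
  "n_dim_complex n C dim le \<longleftrightarrow>
     (\<forall>c\<in>C. dim c \<le> n) \<and> (\<forall>c\<in>C. \<exists>d\<in>C. dim d = n \<and> le c d)"

end

theory Submission imports Defs begin

definition invs :: "'s set \<Rightarrow> ('s \<Rightarrow> 's) \<Rightarrow> ('s \<Rightarrow> 's) \<Rightarrow> bool" where
  "invs S \<sigma>1 \<sigma>2 \<longleftrightarrow> (\<forall>s\<in>S. \<sigma>1 s \<in> S \<and> \<sigma>1 (\<sigma>1 s) = s \<and> \<sigma>1 s \<noteq> s) \<and>
     (\<forall>s\<in>S. \<sigma>2 s \<in> S \<and> \<sigma>2 (\<sigma>2 s) = s)"

lemma fc_props:
  assumes fc: "face_chain S \<sigma>1 \<sigma>2 xs" and I: "invs S \<sigma>1 \<sigma>2" and j: "j < length xs"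
  shows "even j \<Longrightarrow> j+1 < length xs \<and> xs!(j+1) = \<sigma>1 (xs!j)"
    and "odd j \<Longrightarrow> xs!(j-1) = \<sigma>1 (xs!j)"
    and "odd j \<Longrightarrow> j+1 < length xs \<Longrightarrow> xs!(j+1) = \<sigma>2 (xs!j)"
    and "even j \<Longrightarrow> j > 0 \<Longrightarrow> xs!(j-1) = \<sigma>2 (xs!j)"
proof -
  have ev: "even (length xs)" and S: "set xs \<subseteq> S"
    and c1: "\<And>i. 2*i+1 < length xs \<Longrightarrow> xs ! (2*i+1) = \<sigma>1 (xs ! (2*i))"
    and c2: "\<And>i. 2*i+2 < length xs \<Longrightarrow> xs ! (2*i+2) = \<sigma>2 (xs ! (2*i+1))"
    using fc unfolding face_chain_def by auto
  have inS: "\<And>k. k < length xs \<Longrightarrow> xs!k \<in> S" using S by auto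
  have i1: "\<And>s. s \<in> S \<Longrightarrow> \<sigma>1 (\<sigma>1 s) = s" and i2: "\<And>s. s \<in> S \<Longrightarrow> \<sigma>2 (\<sigma>2 s) = s"
    using I unfolding invs_def by auto
  show "even j \<Longrightarrow> j+1 < length xs \<and> xs!(j+1) = \<sigma>1 (xs!j)"
  proof -
    assume "even j" then obtain i where i: "j = 2*i" by (auto elim: evenE)
    have "j+1 < length xs" using ev j \<open>even j\<close> by (metis Suc_eq_plus1 Suc_lessI even_Suc)
    then show ?thesis using c1[of i] i by simp
  qed
  show "odd j \<Longrightarrow> xs!(j-1) = \<sigma>1 (xs!j)"
  proof -
    assume "odd j" then obtain i where i: "j = 2*i+1" by (auto elim: oddE)
    have "xs!j = \<sigma>1 (xs!(2*i))" using c1[of i] i j by simp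
    moreover have "xs!(2*i) \<in> S" using inS i j by simp
    ultimately show ?thesis using i1 i by simp
  qed
  show "odd j \<Longrightarrow> j+1 < length xs \<Longrightarrow> xs!(j+1) = \<sigma>2 (xs!j)"
  proof -
    assume "odd j" "j+1 < length xs" then obtain i where i: "j = 2*i+1" by (auto elim: oddE)
    then show ?thesis using c2[of i] \<open>j+1 < length xs\<close> by (simp add: add.assoc)
  qed
  show "even j \<Longrightarrow> j > 0 \<Longrightarrow> xs!(j-1) = \<sigma>2 (xs!j)"
  proof -
    assume "even j" "j > 0" then obtain k where k: "j = 2*k" by (auto elim: evenE)
    with \<open>j > 0\<close> obtain i where i: "j = 2*i+2" by (cases k) auto
    have "xs!j = \<sigma>2 (xs!(2*i+1))" using c2[of i] i j by simp
    moreover have "xs!(2*i+1) \<in> S" using inS i j by simp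
    ultimately show ?thesis using i2 i by simp
  qed
qed

lemma fc_basic:
  assumes "face_chain S \<sigma>1 \<sigma>2 xs"
  shows "xs \<noteq> []" "even (length xs)" "distinct xs" "set xs \<subseteq> S"
    "\<And>i. 2*i+1 < length xs \<Longrightarrow> xs ! (2*i+1) = \<sigma>1 (xs ! (2*i))"
    "\<And>i. 2*i+2 < length xs \<Longrightarrow> xs ! (2*i+2) = \<sigma>2 (xs ! (2*i+1))"
  using assms unfolding face_chain_def by auto

lemma fc_append:
  assumes fc: "face_chain S \<sigma>1 \<sigma>2 xs" and I: "invs S \<sigma>1 \<sigma>2"
    and n1: "\<sigma>2 (last xs) \<noteq> last xs" and n2: "\<sigma>2 (last xs) \<noteq> hd xs"
  shows "face_chain S \<sigma>1 \<sigma>2 (xs @ [\<sigma>2 (last xs), \<sigma>1 (\<sigma>2 (last xs))])"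
proof -
  note B = fc_basic[OF fc]
  note P = fc_props[OF fc I]
  define n where "n = length xs"
  define y where "y = \<sigma>2 (last xs)"
  have n2': "n \<ge> 2" using B(1,2) unfolding n_def by (cases xs) (auto, presburger)
  have lastn: "last xs = xs!(n-1)" using B(1) unfolding n_def by (simp add: last_conv_nth)
  have hd0: "hd xs = xs!0" using B(1) by (simp add: hd_conv_nth)
  have lS: "last xs \<in> S" using B(1,4) by auto
  have yS: "y \<in> S" and y2: "\<sigma>2 y = last xs" and y1: "\<sigma>1 y \<noteq> y" and y1S: "\<sigma>1 y \<in> S"
    and y11: "\<sigma>1 (\<sigma>1 y) = y"
    using I lS unfolding invs_def y_def by auto
  have dist: "\<And>a b. a < n \<Longrightarrow> b < n \<Longrightarrow> xs!a = xs!b \<Longrightarrow> a = b"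
    using B(3) unfolding n_def by (simp add: nth_eq_iff_index_eq)
  have ynot: "y \<notin> set xs"
  proof
    assume "y \<in> set xs"
    then obtain j where j: "j < n" "xs!j = y" unfolding n_def by (auto simp: in_set_conv_nth)
    show False
    proof (cases "even j")
      case True
      show False
      proof (cases "j = 0")
        case True then show False using j n2 hd0 unfolding y_def by simp
      next
        case False
        then have "xs!(j-1) = xs!(n-1)" using P(4)[of j] j \<open>even j\<close> y2 lastn unfolding n_def by simp
        then have "j - 1 = n - 1" using dist j False by simp
        then show False using j False by simp
      qed
    next
      case False
      show False
      proof (cases "j+1 < n")
        case True
        then have "xs!(j+1) = xs!(n-1)" using P(3)[of j] j False y2 lastn unfolding n_def by simp
        then have "j + 1 = n - 1" using dist True n2' by simp
        then show False using False B(2) n2' unfolding n_def by presburger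
      next
        case True': False
        then have "j = n - 1" using j by simp
        then show False using j lastn n1 unfolding y_def by simp
      qed
    qed
  qed
  have y1not: "\<sigma>1 y \<notin> set xs"
  proof
    assume "\<sigma>1 y \<in> set xs"
    then obtain j where j: "j < n" "xs!j = \<sigma>1 y" unfolding n_def by (auto simp: in_set_conv_nth)
    show False
    proof (cases "even j")
      case True
      then have "xs!(j+1) = y" "j+1 < n" using P(1)[of j] j y11 unfolding n_def by auto
      then show False using ynot by (metis n_def nth_mem)
    next
      case False
      then have "xs!(j-1) = y" "j-1 < n" using P(2)[of j] j y11 unfolding n_def by auto
      then show False using ynot by (metis n_def nth_mem)
    qed
  qed
  let ?ys = "xs @ [y, \<sigma>1 y]"
  have len: "length ?ys = n + 2" unfolding n_def by simp
  have c1: "?ys ! (2*i+1) = \<sigma>1 (?ys ! (2*i))" if "2*i+1 < length ?ys" for i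
  proof (cases "2*i+1 < n")
    case True then show ?thesis using B(5)[of i] unfolding n_def by (simp add: nth_append)
  next
    case False
    then have "2*i = n" using that len B(2) unfolding n_def by presburger
    then show ?thesis unfolding n_def by (simp add: nth_append)
  qed
  have c2: "?ys ! (2*i+2) = \<sigma>2 (?ys ! (2*i+1))" if "2*i+2 < length ?ys" for i
  proof (cases "2*i+2 < n")
    case True then show ?thesis using B(6)[of i] unfolding n_def by (simp add: nth_append)
  next
    case False
    then have "2*i+2 = n" using that len B(2) unfolding n_def by presburger
    then have "n - 1 = 2*i+1" by simp
    then show ?thesis using lastn \<open>2*i+2 = n\<close> unfolding n_def y_def by (simp add: nth_append)
  qed
  have "face_chain S \<sigma>1 \<sigma>2 ?ys"
    unfolding face_chain_def using B(1-4) ynot y1not y1 yS y1S c1 c2 by auto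
  then show ?thesis unfolding y_def .
qed

lemma fc_prepend:
  assumes fc: "face_chain S \<sigma>1 \<sigma>2 xs" and I: "invs S \<sigma>1 \<sigma>2"
    and n1: "\<sigma>2 (hd xs) \<noteq> hd xs" and n2: "\<sigma>2 (last xs) \<noteq> hd xs"
  shows "face_chain S \<sigma>1 \<sigma>2 ([\<sigma>1 (\<sigma>2 (hd xs)), \<sigma>2 (hd xs)] @ xs)"
proof -
  note B = fc_basic[OF fc]
  note P = fc_props[OF fc I]
  define n where "n = length xs"
  define y where "y = \<sigma>2 (hd xs)"
  have n2': "n \<ge> 2" using B(1,2) unfolding n_def by (cases xs) (auto, presburger)
  have lastn: "last xs = xs!(n-1)" using B(1) unfolding n_def by (simp add: last_conv_nth)
  have hd0: "hd xs = xs!0" using B(1) by (simp add: hd_conv_nth)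
  have lS: "hd xs \<in> S" using B(1,4) by auto
  have yS: "y \<in> S" and y2: "\<sigma>2 y = hd xs" and y1: "\<sigma>1 y \<noteq> y" and y1S: "\<sigma>1 y \<in> S"
    and y11: "\<sigma>1 (\<sigma>1 y) = y"
    using I lS unfolding invs_def y_def by auto
  have dist: "\<And>a b. a < n \<Longrightarrow> b < n \<Longrightarrow> xs!a = xs!b \<Longrightarrow> a = b"
    using B(3) unfolding n_def by (simp add: nth_eq_iff_index_eq)
  have ynot: "y \<notin> set xs"
  proof
    assume "y \<in> set xs"
    then obtain j where j: "j < n" "xs!j = y" unfolding n_def by (auto simp: in_set_conv_nth)
    show False
    proof (cases "even j")
      case True
      show False
      proof (cases "j = 0")
        case True then show False using j n1 hd0 unfolding y_def by simp
      next
        case False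
        then have "xs!(j-1) = xs!0" using P(4)[of j] j \<open>even j\<close> y2 hd0 unfolding n_def by simp
        then have "j - 1 = 0" using dist[of "j-1" 0] j False by simp
        then show False using j False \<open>even j\<close> by presburger
      qed
    next
      case False
      show False
      proof (cases "j+1 < n")
        case True
        then have "xs!(j+1) = xs!0" using P(3)[of j] j False y2 hd0 unfolding n_def by simp
        then have "j + 1 = 0" using dist[of "j+1" 0] True n2' by simp
        then show False by simp
      next
        case False
        then have "j = n - 1" using j by simp
        then show False using j lastn n2 y2 unfolding y_def by simp
      qed
    qed
  qed
  have y1not: "\<sigma>1 y \<notin> set xs"
  proof
    assume "\<sigma>1 y \<in> set xs"
    then obtain j where j: "j < n" "xs!j = \<sigma>1 y" unfolding n_def by (auto simp: in_set_conv_nth)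
    show False
    proof (cases "even j")
      case True
      then have "xs!(j+1) = y" "j+1 < n" using P(1)[of j] j y11 unfolding n_def by auto
      then show False using ynot by (metis n_def nth_mem)
    next
      case False
      then have "xs!(j-1) = y" "j-1 < n" using P(2)[of j] j y11 unfolding n_def by auto
      then show False using ynot by (metis n_def nth_mem)
    qed
  qed
  let ?ys = "[\<sigma>1 y, y] @ xs"
  have len: "length ?ys = n + 2" unfolding n_def by simp
  have c1: "?ys ! (2*i+1) = \<sigma>1 (?ys ! (2*i))" if "2*i+1 < length ?ys" for i
  proof (cases i)
    case 0 then show ?thesis using y11 by simp
  next
    case (Suc k)
    then have "2*k+1 < n" using that len by simp
    then show ?thesis using B(5)[of k] Suc unfolding n_def by simp
  qed
  have c2: "?ys ! (2*i+2) = \<sigma>2 (?ys ! (2*i+1))" if "2*i+2 < length ?ys" for i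
  proof (cases i)
    case 0 then show ?thesis using y2 hd0 by simp
  next
    case (Suc k)
    then have "2*k+2 < n" using that len by simp
    then show ?thesis using B(6)[of k] Suc unfolding n_def by simp
  qed
  have "face_chain S \<sigma>1 \<sigma>2 ?ys"
    unfolding face_chain_def using B(1-4) ynot y1not y1 yS y1S c1 c2 len B(2) unfolding n_def by auto
  then show ?thesis unfolding y_def .
qed

lemma strand_in_face:
  assumes I: "invs S \<sigma>1 \<sigma>2" and fin: "finite S" and sS: "s \<in> S"
  shows "\<exists>f \<in> faces S \<sigma>1 \<sigma>2. occurs_in s f"
proof -
  define P where "P xs \<longleftrightarrow> face_chain S \<sigma>1 \<sigma>2 xs \<and> s \<in> set xs" for xs
  have s1: "\<sigma>1 s \<in> S" "\<sigma>1 s \<noteq> s" using I sS unfolding invs_def by auto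
  have c1: "[s, \<sigma>1 s] ! (2*i+1) = \<sigma>1 ([s, \<sigma>1 s] ! (2*i))" if "2*i+1 < 2" for i
    using that by simp
  have P0: "P [s, \<sigma>1 s]" unfolding P_def face_chain_def using s1 sS c1 by auto
  have bd: "\<forall>y. P y \<longrightarrow> length y < card S + 1"
  proof (intro allI impI)
    fix y assume "P y"
    then have "face_chain S \<sigma>1 \<sigma>2 y" unfolding P_def by simp
    then have "distinct y" "set y \<subseteq> S" using fc_basic(3,4) by blast+
    then have "card (set y) \<le> card S" using fin by (simp add: card_mono)
    then show "length y < card S + 1" using \<open>distinct y\<close> by (simp add: distinct_card)
  qed
  obtain xs where xs: "P xs" and mx0: "\<forall>y. P y \<longrightarrow> length y \<le> length xs"
    using ex_has_greatest_nat[OF P0 bd] by (elim exE conjE)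
  have mx: "\<And>y. P y \<Longrightarrow> length y \<le> length xs" using mx0 by simp
  have fc: "face_chain S \<sigma>1 \<sigma>2 xs" and sx: "s \<in> set xs" using xs unfolding P_def by simp_all
  show ?thesis
  proof (cases "\<sigma>2 (last xs) = hd xs")
    case True
    then have "int_face_tuple S \<sigma>1 \<sigma>2 xs" using fc unfolding int_face_tuple_def by simp
    then have F: "{rotate (2*k) xs | k. True} \<in> faces S \<sigma>1 \<sigma>2" unfolding faces_def by (intro UnI2) (rule CollectI, rule exI[of _ xs], simp)
    have X: "xs \<in> {rotate (2*k) xs | k. True}" by (rule CollectI, rule exI[of _ 0]) simp
    have "occurs_in s {rotate (2*k) xs | k. True}" unfolding occurs_in_def using X sx by (rule bexI[of _ xs, rotated])
    then show ?thesis using F by (rule bexI)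
  next
    case nl: False
    show ?thesis
    proof (cases "\<sigma>2 (last xs) = last xs")
      case lfix: True
      show ?thesis
      proof (cases "\<sigma>2 (hd xs) = hd xs")
        case True
        then have "ext_face_tuple S \<sigma>1 \<sigma>2 xs" using fc lfix unfolding ext_face_tuple_def by simp
        then have F: "{xs} \<in> faces S \<sigma>1 \<sigma>2" unfolding faces_def by (intro UnI1) (rule CollectI, rule exI[of _ xs], simp)
        have "occurs_in s {xs}" unfolding occurs_in_def using sx by simp
        then show ?thesis using F by (rule bexI)
      next
        case False
        have "P ([\<sigma>1 (\<sigma>2 (hd xs)), \<sigma>2 (hd xs)] @ xs)"
          using fc_prepend[OF fc I False nl] sx unfolding P_def by simp
        from mx[OF this] show ?thesis by simp
      qed
    next
      case False
      have "P (xs @ [\<sigma>2 (last xs), \<sigma>1 (\<sigma>2 (last xs))])"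
        using fc_append[OF fc I False nl] sx unfolding P_def by simp
      from mx[OF this] show ?thesis by simp
    qed
  qed
qed

lemma face_has_chain:
  assumes "f \<in> faces S \<sigma>1 \<sigma>2" shows "\<exists>xs\<in>f. face_chain S \<sigma>1 \<sigma>2 xs"
  using assms unfolding faces_def
proof (elim UnE)
  assume "f \<in> {{xs} | xs. ext_face_tuple S \<sigma>1 \<sigma>2 xs}"
  then obtain xs where "f = {xs}" "ext_face_tuple S \<sigma>1 \<sigma>2 xs" by auto
  then show ?thesis unfolding ext_face_tuple_def by auto
next
  assume "f \<in> {{rotate (2*k) xs | k. True} | xs. int_face_tuple S \<sigma>1 \<sigma>2 xs}"
  then obtain xs where 2: "f = {rotate (2*k) xs | k. True}" "int_face_tuple S \<sigma>1 \<sigma>2 xs" by auto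
  have "xs \<in> {rotate (2*k) xs | k. True}" by (rule CollectI, rule exI[of _ 0]) simp
  then show ?thesis using 2 unfolding int_face_tuple_def by auto
qed

lemma edge_exists:
  assumes "h \<in> H" shows "\<exists>e \<in> int_edges H \<iota> \<union> ext_edges H \<iota>. h \<in> e"
proof (cases "\<iota> h = h")
  case True then have "{h} \<in> ext_edges H \<iota>" using assms unfolding ext_edges_def by blast
  then show ?thesis by blast
next
  case False then have "{h, \<iota> h} \<in> int_edges H \<iota>" using assms unfolding int_edges_def by blast
  then show ?thesis by blast
qed

lemma edge_sub:
  assumes "e \<in> int_edges H \<iota> \<union> ext_edges H \<iota>" "\<forall>h\<in>H. \<iota> h \<in> H"
  shows "e \<subseteq> H" "e \<noteq> {}"
  using assms unfolding int_edges_def ext_edges_def by auto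

lemma less_F: "\<not> cellG_less Ed \<nu> \<mu> (FCell f) c"
  by (cases c) auto

lemma less_dim: "cellG_less Ed \<nu> \<mu> a b \<Longrightarrow> cdim a < cdim b"
  by (cases a; cases b) auto

theorem mainTheorem2:
  fixes V :: "'v set" and H :: "'h set" and S :: "'s set"
    and \<nu> :: "'h \<Rightarrow> 'v" and \<iota> :: "'h \<Rightarrow> 'h" and \<mu> :: "'s \<Rightarrow> 'h"
    and \<sigma>1 \<sigma>2 :: "'s \<Rightarrow> 's"
  assumes G: "two_graph V H \<nu> \<iota> S \<mu> \<sigma>1 \<sigma>2"
  defines "Ed \<equiv> int_edges H \<iota> \<union> ext_edges H \<iota>"
  defines "C \<equiv> cells V H \<iota> S \<sigma>1 \<sigma>2"
  shows "reidemeister_complex C cdim (cellG_le Ed \<nu> \<mu>) \<and>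
         pure_complex C cdim (cellG_le Ed \<nu> \<mu>) \<and>
         ((\<forall>v\<in>V. \<exists>h\<in>H. \<nu> h = v) \<and> (\<forall>h\<in>H. \<exists>s\<in>S. \<mu> s = h)
            \<longrightarrow> n_dim_complex 2 C cdim (cellG_le Ed \<nu> \<mu>))"
proof -
  have finS: "finite S" and nuH: "\<forall>h\<in>H. \<nu> h \<in> V" and muS: "\<forall>s\<in>S. \<mu> s \<in> H"
    and iH: "\<forall>h\<in>H. \<iota> h \<in> H"
    using G unfolding two_graph_def by auto
  have I: "invs S \<sigma>1 \<sigma>2" using G unfolding two_graph_def invs_def by blast
  have CE: "ECell e \<in> C \<longleftrightarrow> e \<in> Ed" for e unfolding C_def cells_def Ed_def by auto
  have CV: "VCell v \<in> C \<longleftrightarrow> v \<in> V" for v unfolding C_def cells_def by auto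
  have CF: "FCell f \<in> C \<longleftrightarrow> f \<in> faces S \<sigma>1 \<sigma>2" for f unfolding C_def cells_def by auto
  have EdH: "e \<subseteq> H" "e \<noteq> {}" if "e \<in> Ed" for e using edge_sub[of e H \<iota>] that iH unfolding Ed_def by auto
  have edge: "\<exists>e\<in>Ed. h \<in> e" if "h \<in> H" for h using edge_exists[OF that, of \<iota>] unfolding Ed_def .
  have R: "reidemeister_complex C cdim (cellG_le Ed \<nu> \<mu>)"
    unfolding reidemeister_complex_def
  proof (intro conjI ballI impI)
    fix c assume "c \<in> C" show "cellG_le Ed \<nu> \<mu> c c" unfolding cellG_le_def by simp
  next
    fix a b assume "cellG_le Ed \<nu> \<mu> a b \<and> cellG_le Ed \<nu> \<mu> b a"
    then show "a = b" unfolding cellG_le_def using less_dim by (metis less_asym)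
  next
    fix a b c assume abc: "a \<in> C" "b \<in> C" "c \<in> C"
      and h: "cellG_le Ed \<nu> \<mu> a b \<and> cellG_le Ed \<nu> \<mu> b c"
    show "cellG_le Ed \<nu> \<mu> a c"
    proof (cases "a = b \<or> b = c")
      case True then show ?thesis using h by auto
    next
      case False
      then have l1: "cellG_less Ed \<nu> \<mu> a b" and l2: "cellG_less Ed \<nu> \<mu> b c"
        using h unfolding cellG_le_def by auto
      show ?thesis
      proof (cases a)
        case (VCell v)
        show ?thesis
        proof (cases b)
          case (ECell e)
          then have eE: "e \<in> Ed" using abc CE by simp
          show ?thesis
          proof (cases c)
            case (FCell f)
            then show ?thesis using l1 l2 eE VCell ECell unfolding cellG_le_def by auto
          qed (use l2 ECell in auto)
        qed (use l1 l2 VCell less_F in auto)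
      next
        case (ECell e) then show ?thesis using l1 l2 by (cases b; cases c) auto
      next
        case (FCell f) then show ?thesis using l1 by (cases b) auto
      qed
    qed
  next
    fix c c'' assume cs: "c \<in> C" "c'' \<in> C"
      and h: "cellG_le Ed \<nu> \<mu> c'' c \<and> c'' \<noteq> c \<and> cdim c > cdim c'' + 1"
    then have l: "cellG_less Ed \<nu> \<mu> c'' c" unfolding cellG_le_def by auto
    have "\<exists>v f. c'' = VCell v \<and> c = FCell f"
      using l h by (cases c''; cases c) auto
    then obtain v f where vf: "c'' = VCell v" "c = FCell f" by blast
    then obtain e where e: "e \<in> Ed" "\<exists>h\<in>e. \<nu> h = v" "\<exists>h\<in>e. \<exists>s. occurs_in s f \<and> \<mu> s = h"
      using l by auto
    show "\<exists>c'\<in>C. cellG_le Ed \<nu> \<mu> c' c \<and> c' \<noteq> c \<and> cellG_le Ed \<nu> \<mu> c'' c' \<and> c'' \<noteq> c'"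
    proof (rule bexI[of _ "ECell e"])
      show "ECell e \<in> C" using CE e(1) by simp
      show "cellG_le Ed \<nu> \<mu> (ECell e) c \<and> ECell e \<noteq> c \<and> cellG_le Ed \<nu> \<mu> c'' (ECell e) \<and> c'' \<noteq> ECell e"
        using vf e unfolding cellG_le_def by auto
    qed
  qed
  have P: "pure_complex C cdim (cellG_le Ed \<nu> \<mu>)"
    unfolding pure_complex_def
  proof (intro ballI impI)
    fix c assume cC: "c \<in> C" and d: "cdim c \<noteq> 0"
    show "\<exists>c0\<in>C. cdim c0 = 0 \<and> cellG_le Ed \<nu> \<mu> c0 c \<and> c0 \<noteq> c"
    proof (cases c)
      case (VCell v) then show ?thesis using d by simp
    next
      case (ECell e)
      then have "e \<in> Ed" using cC CE by simp
      then obtain h where "h \<in> e" "h \<in> H" using EdH by blast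
      then have "VCell (\<nu> h) \<in> C" using CV nuH by simp
      moreover have "cellG_le Ed \<nu> \<mu> (VCell (\<nu> h)) c" using ECell \<open>h \<in> e\<close> unfolding cellG_le_def by auto
      ultimately show ?thesis using ECell by (intro bexI[of _ "VCell (\<nu> h)"]) auto
    next
      case (FCell f)
      then have "f \<in> faces S \<sigma>1 \<sigma>2" using cC CF by simp
      then obtain xs where xs: "xs \<in> f" "face_chain S \<sigma>1 \<sigma>2 xs" using face_has_chain by blast
      then have "hd xs \<in> set xs" "set xs \<subseteq> S" using fc_basic(1,4)[OF xs(2)] by auto
      then have hS: "hd xs \<in> S" by auto
      then have hH: "\<mu> (hd xs) \<in> H" using muS by simp
      then obtain e where e: "e \<in> Ed" "\<mu> (hd xs) \<in> e" using edge by blast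
      have oc: "occurs_in (hd xs) f" unfolding occurs_in_def using xs(1) \<open>hd xs \<in> set xs\<close> by blast
      have "VCell (\<nu> (\<mu> (hd xs))) \<in> C" using CV nuH hH by simp
      moreover have "cellG_less Ed \<nu> \<mu> (VCell (\<nu> (\<mu> (hd xs)))) (FCell f)"
        using e oc by auto
      ultimately show ?thesis using FCell unfolding cellG_le_def
        by (intro bexI[of _ "VCell (\<nu> (\<mu> (hd xs)))"]) simp_all
    qed
  qed
  have key: "\<exists>f\<in>faces S \<sigma>1 \<sigma>2. cellG_less Ed \<nu> \<mu> (ECell e) (FCell f)"
    if eEd: "e \<in> Ed" and sur: "\<forall>h\<in>H. \<exists>s\<in>S. \<mu> s = h" for e
  proof -
    obtain h where h: "h \<in> e" "h \<in> H" using EdH[OF eEd] by blast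
    then obtain s where s: "s \<in> S" "\<mu> s = h" using sur by blast
    obtain f where f: "f \<in> faces S \<sigma>1 \<sigma>2" "occurs_in s f" using strand_in_face[OF I finS s(1)] by blast
    have "cellG_less Ed \<nu> \<mu> (ECell e) (FCell f)" using h s f by auto
    then show ?thesis using f(1) by (intro bexI[of _ f])
  qed
  have N: "n_dim_complex 2 C cdim (cellG_le Ed \<nu> \<mu>)"
    if A: "(\<forall>v\<in>V. \<exists>h\<in>H. \<nu> h = v)" "(\<forall>h\<in>H. \<exists>s\<in>S. \<mu> s = h)"
    unfolding n_dim_complex_def
  proof (intro conjI ballI)
    fix c assume "c \<in> C" show "cdim c \<le> 2" by (cases c) auto
  next
    fix c assume cC: "c \<in> C"
    show "\<exists>d\<in>C. cdim d = 2 \<and> cellG_le Ed \<nu> \<mu> c d"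
    proof (cases c)
      case (FCell f) then show ?thesis using cC unfolding cellG_le_def by (intro bexI[of _ c]) simp_all
    next
      case (ECell e)
      then have "e \<in> Ed" using cC CE by simp
      then obtain f where "f \<in> faces S \<sigma>1 \<sigma>2" "cellG_less Ed \<nu> \<mu> (ECell e) (FCell f)"
        using key A(2) by blast
      then show ?thesis using ECell CF unfolding cellG_le_def by (intro bexI[of _ "FCell f"]) simp_all
    next
      case (VCell v)
      then have "v \<in> V" using cC CV by simp
      then obtain h where h: "h \<in> H" "\<nu> h = v" using A(1) by blast
      then obtain e where e: "e \<in> Ed" "h \<in> e" using edge by blast
      then obtain f where f: "f \<in> faces S \<sigma>1 \<sigma>2" "cellG_less Ed \<nu> \<mu> (ECell e) (FCell f)"
        using key A(2) by blast
      have "cellG_less Ed \<nu> \<mu> (VCell v) (FCell f)" using e h f(2) by auto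
      then show ?thesis using VCell CF f(1) unfolding cellG_le_def by (intro bexI[of _ "FCell f"]) simp_all
    qed
  qed
  show ?thesis using R P N by blast
qed

end
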